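(* The only pair of natural numbers $(x,y)$ (with $0 \in \mathbb{N}$) such that $7^x-5^y$ is a perfect square is $(0,0)$.
   Context: Here $\mathbb{N}=\{0,1,2,\dots\}$, and a perfect square means $n^2$ for some $n\in\mathbb{N}$. *)

theory Defs
  imports Main
begin

end

theory Submission
  imports Defs
begin

lemma p7: "x \<ge> 1 \<Longrightarrow> (7::int)^x mod 21 = 7"
proof (induction x)
  case 0 then show ?case by simp
next
  case (Suc x)
  show ?case
  proof (cases "x = 0")
    case True then show ?thesis by simp
  next
    case False
    then have "(7::int)^x mod 21 = 7" using Suc by simp
    then have "(7::int)^(Suc x) mod 21 = (7 * ((7::int)^x mod 21)) mod 21"
      by (metis power_Suc mod_mult_right_eq)
    also have "... = 7" using \<open>(7::int)^x mod 21 = 7\<close> by simp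
    finally show ?thesis .
  qed
qed

lemma p5: "(5::int)^y mod 21 \<in> {1,5,4,20,16,17}"
proof (induction y)
  case 0 then show ?case by simp
next
  case (Suc y)
  have "(5::int)^(Suc y) mod 21 = (5 * ((5::int)^y mod 21)) mod 21"
    by (metis power_Suc mod_mult_right_eq)
  then show ?case using Suc by auto
qed

lemma sq21_aux: "\<forall>m<(21::nat). (int m)^2 mod 21 \<in> {0,1,4,7,9,15,16,18}"
  by (simp add: less_Suc_eq numeral_eq_Suc)

lemma sq21: "(r::int)^2 mod 21 \<in> {0,1,4,7,9,15,16,18}"
proof -
  have e: "r^2 mod 21 = (r mod 21)^2 mod 21" by (simp add: power_mod)
  have "r mod 21 = int (nat (r mod 21))" by simp
  moreover have "nat (r mod 21) < 21" by simp
  ultimately show ?thesis using e sq21_aux by metis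
qed

theorem mainTheorem3:
  fixes x y :: nat
  shows "(\<exists>n::nat. (7::int) ^ x - 5 ^ y = int n ^ 2) \<longleftrightarrow> (x = 0 \<and> y = 0)"
proof
  assume "\<exists>n::nat. (7::int) ^ x - 5 ^ y = int n ^ 2"
  then obtain n :: nat where h: "(7::int) ^ x - 5 ^ y = int n ^ 2" by blast
  show "x = 0 \<and> y = 0"
  proof (cases "x = 0")
    case True
    have g: "(int n)^2 \<ge> 0" by simp
    have h0: "(1::int) - 5^y = int n ^2" using h True by simp
    have "(5::int)^y \<le> 1" using h0 g by linarith
    then have "y = 0"
    proof (rule contrapos_pp)
      assume "y \<noteq> 0"
      then have "(1::int) < 5^y" by (intro one_less_power) auto
      then show "\<not> (5::int)^y \<le> 1" by simp
    qed
    with True show ?thesis by simp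
  next
    case False
    have q: "(7::int)^x mod 21 = 7" using False by (intro p7) simp
    have a0: "((7::int) ^ x - 5 ^ y) mod 21 = ((7::int)^x mod 21 - (5::int)^y mod 21) mod 21"
      by (rule mod_diff_eq[symmetric])
    have a: "((7::int) ^ x - 5 ^ y) mod 21 = (7 - (5::int)^y mod 21) mod 21"
      using a0 q by simp
    have A: "(7 - (5::int)^y mod 21) mod 21 \<in> {6,2,3,8,12,11}"
      using p5[of y] by auto
    have B: "(int n ^ 2) mod 21 \<in> {0,1,4,7,9,15,16,18}" by (rule sq21)
    have "(int n ^ 2) mod 21 \<in> {6,2,3,8,12,11}" using A a h by simp
    with B have False by auto
    then show ?thesis ..
  qed
qed simp

end
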